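(* Let $q=2^h$, let $n,s$ be positive integers, $\beta\in\mathbb{F}_{q^n}\setminus\{0,1\}$, and $\epsilon\in\mathbb{F}_{q^n}$ with $\mathrm{Tr}_{q^n/2}(\epsilon)=1$. Then the plane curve $\mathcal{C}_2$ with affine equation $F_2(X,Z)=0$, where \[ F_2(X,Z)=X^2(Z^2+Z+\epsilon)^{q^s}+X\bigl(\beta+\mathrm{Tr}_{q^s/2}(Z^2+Z+\epsilon)\bigr)+Z^2+Z+\epsilon, \] is absolutely irreducible.
   Context: $\mathrm{Tr}_{q^s/2}(Y)=\sum_{i=0}^{hs-1}Y^{2^i}$ (as a polynomial), and $\mathrm{Tr}_{q^n/2}(x)=\sum_{i=0}^{hn-1}x^{2^i}$ is the absolute trace of $\mathbb{F}_{q^n}$. Absolutely irreducible means irreducible over the algebraic closure of $\mathbb{F}_{q^n}$. *)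

theory Defs
  imports "HOL-Computational_Algebra.Computational_Algebra"
begin

text \<open>Bivariate polynomials in X, Z are represented as elements of \<open>'a poly poly\<close>:
  the outer variable is X, the inner variable (coefficients) is Z.\<close>

definition abs_trace :: "nat \<Rightarrow> 'a::comm_ring_1 \<Rightarrow> 'a" where
  "abs_trace m x = (\<Sum>i<m. x ^ (2 ^ i))"

definition trace_poly :: "nat \<Rightarrow> 'a::comm_ring_1 poly \<Rightarrow> 'a poly" where
  "trace_poly m G = (\<Sum>i<m. G ^ (2 ^ i))"

definition F2 :: "nat \<Rightarrow> nat \<Rightarrow> 'a::comm_ring_1 \<Rightarrow> 'a \<Rightarrow> 'a poly poly" where
  "F2 h s \<beta> \<epsilon> =
     (let G = [:\<epsilon>, 1, 1:]
      in [: G, [:\<beta>:] + trace_poly (h * s) G, G ^ ((2 ^ h) ^ s) :])"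

end

theory Submission
  imports Defs
begin

lemma rep_lemma:
  fixes f :: "'k::alg_closed_field poly"
  assumes "f \<noteq> 0" "\<And>x. poly f x = 0 \<Longrightarrow> x = u \<or> x = v"
  shows "\<exists>c i j. c \<noteq> 0 \<and> f = smult c ([:-u,1:]^i * [:-v,1:]^j)"
  using assms
proof (induction "degree f" arbitrary: f rule: less_induct)
  case less
  show ?case
  proof (cases "degree f = 0")
    case True
    then obtain c where "f = [:c:]" by (metis degree_eq_zeroE)
    with less.prems show ?thesis by (intro exI[of _ c] exI[of _ 0]) auto
  next
    case False
    then obtain r where r: "poly f r = 0" using alg_closed_imp_poly_has_root by blast
    then obtain g where g: "f = [:-r,1:] * g" using poly_eq_0_iff_dvd by (metis dvdE)
    have g0: "g \<noteq> 0" using g less.prems by auto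
    have dg: "degree g < degree f" proof -
      have "degree f = degree [:-r,1:] + degree g" using g g0 by (metis degree_mult_eq pCons_eq_0_iff zero_neq_one)
      then show ?thesis by simp
    qed
    have rg: "poly g x = 0 \<Longrightarrow> x = u \<or> x = v" for x using less.prems(2)[of x] g by simp
    obtain c i j where c: "c \<noteq> 0" "g = smult c ([:-u,1:]^i * [:-v,1:]^j)"
      using less.hyps[OF dg g0 rg] by blast
    have "r = u \<or> r = v" using less.prems(2) r by blast
    then show ?thesis
    proof
      assume "r = u"
      then have "f = smult c ([:-u,1:]^(Suc i) * [:-v,1:]^j)" using g c by (simp add: algebra_simps)
      then show ?thesis using c by blast
    next
      assume "r = v"
      then have "f = smult c ([:-u,1:]^i * [:-v,1:]^(Suc j))" using g c by (simp add: algebra_simps)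
      then show ?thesis using c by blast
    qed
  qed
qed

lemma char2_neg: "(2::'k::comm_ring_1) = 0 \<Longrightarrow> -(1::'k) = 1"
proof -
  assume "(2::'k) = 0"
  then have "1 + 1 = (0::'k)" by simp
  then show ?thesis by (metis add.inverse_unique)
qed

lemma order_aux:
  fixes z :: "'k::field"
  assumes "z \<noteq> w"
  shows "order z ([:-z,1:]^i * [:-w,1:]^j) = i"
proof -
  have "poly ([:-w,1:]^j) z \<noteq> 0" using assms by (simp add: poly_power)
  then have "order z ([:-w,1:]^j) = 0" by (rule order_0I)
  moreover have "[:-z,1:]^i * [:-w,1:]^j \<noteq> 0" by simp
  ultimately show ?thesis by (simp add: order_mult order_power_n_n)
qed

lemma lc_aux: "lead_coeff ([:-z,1:]^i * [:-w,1::'k::field:]^j) = 1"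
  by (simp add: lead_coeff_mult lead_coeff_power)

lemma deg_aux: "degree ([:-z,1:]^i * [:-w,1::'k::field:]^j) = i + j"
  by (simp add: degree_mult_eq degree_power_eq)

lemma core:
  fixes t1 t2 :: "'k::alg_closed_field poly" and z b :: 'k
  assumes two: "(2::'k) = 0" and N: "N \<ge> 1"
    and prod: "t1 * t2 = ([:-z,1:] * [:-(z+1),1:])^N"
    and e1: "poly (t1+t2) z = b" and e2: "poly (t1+t2) (z+1) = b"
    and b0: "b \<noteq> 0" and b1: "b \<noteq> 1" and deg: "degree (t1+t2) < 2*N"
  shows False
proof -
  define P1 where "P1 = [:-z,1:]"
  define P2 where "P2 = [:-(z+1),1::'k:]"
  have m1: "-(1::'k) = 1" using char2_neg[OF two] .
  have zz: "z \<noteq> z + 1" by simp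
  have zz': "z + 1 \<noteq> z" by simp
  have prod': "t1 * t2 = P1^N * P2^N" using prod unfolding P1_def P2_def by (simp only: power_mult_distrib)
  have nz: "P1^N * P2^N \<noteq> 0" by (simp add: P1_def P2_def)
  have t10: "t1 \<noteq> 0" and t20: "t2 \<noteq> 0" using prod' nz by auto
  have roots: "poly t x = 0 \<Longrightarrow> x = z \<or> x = z + 1" if "t dvd t1 * t2" for t x
  proof -
    assume "poly t x = 0"
    then have "poly (t1*t2) x = 0" using that by (metis dvdE mult_eq_0_iff poly_mult)
    then have "poly (P1^N * P2^N) x = 0" using prod' by simp
    then have "poly P1 x = 0 \<or> poly P2 x = 0" by (simp add: poly_power) blast
    moreover have "poly P1 x = x - z" "poly P2 x = x - (z + 1)" by (simp_all add: P1_def P2_def)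
    ultimately have "x - z = 0 \<or> x - (z + 1) = 0" by simp
    then show ?thesis by (metis eq_iff_diff_eq_0)
  qed
  have r1: "\<And>x. poly t1 x = 0 \<Longrightarrow> x = z \<or> x = z + 1" using roots[of t1] by simp
  have r2: "\<And>x. poly t2 x = 0 \<Longrightarrow> x = z \<or> x = z + 1" using roots[of t2] by simp
  obtain c1 i1 j1 where c1: "c1 \<noteq> 0" "t1 = smult c1 (P1^i1 * P2^j1)"
    using rep_lemma[OF t10 r1] unfolding P1_def P2_def by blast
  obtain c2 i2 j2 where c2: "c2 \<noteq> 0" "t2 = smult c2 (P1^i2 * P2^j2)"
    using rep_lemma[OF t20 r2] unfolding P1_def P2_def by blast
  have eq: "smult (c1*c2) (P1^(i1+i2) * P2^(j1+j2)) = P1^N * P2^N"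
    using prod' c1 c2 by (simp add: power_add algebra_simps)
  have ne: "P1^(i1+i2) * P2^(j1+j2) \<noteq> 0" by (simp add: P1_def P2_def)
  have oA: "order z (P1^i * P2^j) = i" for i j unfolding P1_def P2_def by (rule order_aux[OF zz])
  have oB: "order (z+1) (P1^i * P2^j) = j" for i j
    using order_aux[OF zz', of j i] unfolding P1_def P2_def by (simp only: mult.commute)
  have lcA: "lead_coeff (P1^i * P2^j) = 1" for i j unfolding P1_def P2_def by (rule lc_aux)
  have "order z (smult (c1*c2) (P1^(i1+i2) * P2^(j1+j2))) = i1 + i2"
    using c1 c2 by (simp add: order_smult oA)
  moreover have "order z (P1^N * P2^N) = N" by (simp add: oA)
  ultimately have si: "i1 + i2 = N" using eq by simp
  have "order (z+1) (smult (c1*c2) (P1^(i1+i2) * P2^(j1+j2))) = j1 + j2"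
    using c1 c2 by (simp add: order_smult oB)
  moreover have "order (z+1) (P1^N * P2^N) = N" by (simp add: oB)
  ultimately have sj: "j1 + j2 = N" using eq by simp
  have "lead_coeff (smult (c1*c2) (P1^(i1+i2) * P2^(j1+j2))) = c1 * c2"
    by (simp add: lcA)
  moreover have "lead_coeff (P1^N * P2^N) = 1" by (simp add: lcA)
  ultimately have cc: "c1 * c2 = 1" using eq by simp
  have p1z: "poly P1 z = 0" "poly P2 z = 1" "poly P1 (z+1) = 1" "poly P2 (z+1) = 0"
    using m1 by (simp_all add: P1_def P2_def)
  have pt: "poly (smult c (P1^i * P2^j)) z = c * 0^i" "poly (smult c (P1^i * P2^j)) (z+1) = c * 0^j" for c i j
    using p1z by (simp_all add: poly_power)
  have E1: "c1 * 0^i1 + c2 * 0^i2 = b" using e1 c1 c2 by (simp add: poly_power p1z)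
  have E2: "c1 * 0^j1 + c2 * 0^j2 = b" using e2 c1 c2 by (simp add: poly_power p1z)
  have bb: "b * b \<noteq> 1"
  proof
    assume h: "b * b = 1"
    have "(b - 1) * (b - 1) = b * b - 1 - 2 * (b - 1)" by (simp add: algebra_simps)
    also have "\<dots> = 0" using h two by simp
    finally show False using b1 by simp
  qed
  have dP: "degree (P1^i * P2^j) = i + j" for i j
    unfolding P1_def P2_def by (rule deg_aux)
  have C1: "(i1 = 0 \<and> i2 = N) \<or> (i1 = N \<and> i2 = 0)"
  proof (cases "i1 = 0")
    case True then show ?thesis using si by simp
  next
    case False
    then have "i2 = 0" using E1 b0 by (cases "i2 = 0") (simp_all add: zero_power)
    then show ?thesis using si by simp
  qed
  have C2: "(j1 = 0 \<and> j2 = N) \<or> (j1 = N \<and> j2 = 0)"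
  proof (cases "j1 = 0")
    case True then show ?thesis using sj by simp
  next
    case False
    then have "j2 = 0" using E2 b0 by (cases "j2 = 0") (simp_all add: zero_power)
    then show ?thesis using sj by simp
  qed
  from C1 show False
  proof
    assume A: "i1 = 0 \<and> i2 = N"
    from C2 show False
    proof
      assume B: "j1 = 0 \<and> j2 = N"
      then have "degree t1 = 0" "degree t2 = 2 * N" using A c1 c2 dP by (auto simp: degree_smult_eq)
      then have "degree (t1 + t2) = 2 * N" using N by (simp add: degree_add_eq_right)
      then show False using deg by simp
    next
      assume B: "j1 = N \<and> j2 = 0"
      then have "c1 = b" "c2 = b" using A E1 E2 N by (auto simp: zero_power)
      then show False using cc bb by simp
    qed
  next
    assume A: "i1 = N \<and> i2 = 0"
    from C2 show False
    proof
      assume B: "j1 = 0 \<and> j2 = N"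
      then have "c1 = b" "c2 = b" using A E1 E2 N by (auto simp: zero_power)
      then show False using cc bb by simp
    next
      assume B: "j1 = N \<and> j2 = 0"
      then have "degree t2 = 0" "degree t1 = 2 * N" using A c1 c2 dP by (auto simp: degree_smult_eq)
      then have "degree (t1 + t2) = 2 * N" using N by (simp add: degree_add_eq_left)
      then show False using deg by simp
    qed
  qed
qed

lemma deg1_form: "degree (A::'a::zero poly) \<le> 1 \<Longrightarrow> A = [:coeff A 0, coeff A 1:]"
  by (rule poly_eqI) (auto simp: coeff_pCons coeff_eq_0 split: nat.split)

lemma mult_lin: "[:a0,a1:] * [:b0,b1:] = [:a0*b0, a0*b1 + a1*b0, a1*b1::'a::comm_ring_1:]"
  by (simp add: algebra_simps)

lemma main_k:
  fixes e bk :: "'k::alg_closed_field"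
  assumes two: "(2::'k) = 0" and bk0: "bk \<noteq> 0" and bk1: "bk \<noteq> 1" and m: "m > 0"
  shows "irreducible [: [:e,1,1:], [:bk:] + (\<Sum>i<m. [:e,1,1:]^(2^i)), [:e,1,1:]^(2^m) :]"
proof -
  define G where "G = [:e,1,1::'k:]"
  define S where "S = [:bk:] + (\<Sum>i<m. G^(2^i))"
  define Fk where "Fk = [: G, S, G^(2^m) :]"
  have m1: "-(1::'k) = 1" using char2_neg[OF two] .
  have G0: "G \<noteq> 0" and dG: "degree G = 2" by (simp_all add: G_def)
  obtain z where z: "poly G z = 0" using alg_closed_imp_poly_has_root[of G] dG by auto
  have ez: "z * z + z = e"
  proof -
    have "e + z + z * z = 0" using z by (simp add: G_def algebra_simps)
    then have "z * z + z = - e" by (simp add: algebra_simps eq_neg_iff_add_eq_0)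
    also have "\<dots> = (-1) * e" by simp
    also have "\<dots> = e" using m1 by simp
    finally show ?thesis .
  qed
  have Gfac: "G = [:-z,1:] * [:-(z+1),1:]"
  proof -
    have "[:-z,1:] * [:-(z+1),1:] = [:z*z+z, -1 - 2*z, 1:]" by (simp add: algebra_simps)
    also have "\<dots> = [:e, 1, 1:]" using ez m1 two by simp
    finally show ?thesis unfolding G_def by (rule sym)
  qed
  have z2: "poly G (z+1) = 0"
  proof -
    have "poly G (z+1) = poly [:-z,1:] (z+1) * poly [:-(z+1),1:] (z+1)"
      by (subst Gfac) (rule poly_mult)
    also have "poly [:-(z+1),1:] (z+1) = 0" by simp
    finally show ?thesis by simp
  qed
  have Sroot: "poly S r = bk" if "poly G r = 0" for r
    using that by (simp add: S_def poly_sum poly_power zero_power)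
  have degS: "degree S \<le> 2^m"
  proof -
    have "degree (G^(2^i)) \<le> 2^m" if "i < m" for i
    proof -
      have "degree (G^(2^i)) = 2^i * 2" using dG G0 by (simp add: degree_power_eq)
      also have "\<dots> = 2^(Suc i)" by simp
      also have "\<dots> \<le> 2^m" using that by (intro power_increasing) auto
      finally show ?thesis .
    qed
    then have "degree (\<Sum>i<m. G^(2^i)) \<le> 2^m" by (intro degree_sum_le) auto
    then show ?thesis unfolding S_def
      by (metis degree_add_le degree_pCons_0 le_zero_eq nat_le_linear)
  qed
  have GQ0: "G^(2^m) \<noteq> 0" using G0 by simp
  have F0: "Fk \<noteq> 0" using G0 by (simp add: Fk_def)
  have dF: "degree Fk = 2" using GQ0 by (simp add: Fk_def)
  have constcase: "is_unit A" if AB: "Fk = A * B" and dA: "degree A = 0" for A B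
  proof -
    define a where "a = coeff A 0"
    have Aa: "A = [:a:]" using dA a_def by (metis degree_eq_zeroE coeff_pCons_0)
    have Fs: "Fk = smult a B" using AB Aa by simp
    have a0: "a \<noteq> 0" using Fs F0 by auto
    have "coeff Fk 0 = a * coeff B 0" "coeff Fk 1 = a * coeff B 1" using Fs by simp_all
    then have dv: "a dvd G" "a dvd S" by (simp_all add: Fk_def)
    have "degree a = 0"
    proof (rule ccontr)
      assume "degree a \<noteq> 0"
      then obtain r where r: "poly a r = 0" using alg_closed_imp_poly_has_root[of a] by auto
      have "poly G r = 0" using dv(1) r by (metis dvdE mult_eq_0_iff poly_mult)
      moreover have "poly S r = 0" using dv(2) r by (metis dvdE mult_eq_0_iff poly_mult)
      ultimately show False using Sroot bk0 by simp
    qed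
    then have "is_unit a" using a0 by (simp add: is_unit_iff_degree)
    then show ?thesis using Aa by (simp add: is_unit_poly_iff)
  qed
  have "irreducible Fk"
  proof (rule irreducibleI)
    show "Fk \<noteq> 0" by (rule F0)
    show "\<not> is_unit Fk" using dF by (auto simp: is_unit_poly_iff)
  next
    fix A B assume AB: "Fk = A * B"
    have A0: "A \<noteq> 0" and B0: "B \<noteq> 0" using AB F0 by auto
    have dAB: "degree A + degree B = 2" using AB A0 B0 dF by (simp add: degree_mult_eq)
    show "is_unit A \<or> is_unit B"
    proof (cases "degree A = 0")
      case True then show ?thesis using constcase AB by blast
    next
      case nA: False
      show ?thesis
      proof (cases "degree B = 0")
        case True then show ?thesis using constcase[of B A] AB by (simp add: mult.commute)
      next
        case nB: False
        have "degree A \<le> 1" "degree B \<le> 1" using dAB nA nB by auto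
        then have "A = [:coeff A 0, coeff A 1:]" "B = [:coeff B 0, coeff B 1:]"
          by (simp_all only: deg1_form[symmetric])
        then have "Fk = [:coeff A 0 * coeff B 0, coeff A 0 * coeff B 1 + coeff A 1 * coeff B 0,
                     coeff A 1 * coeff B 1:]" using AB mult_lin by metis
        then have eqs: "G = coeff A 0 * coeff B 0" "S = coeff A 0 * coeff B 1 + coeff A 1 * coeff B 0"
          "G^(2^m) = coeff A 1 * coeff B 1" unfolding Fk_def pCons_eq_iff by blast+
        define t1 where "t1 = coeff A 0 * coeff B 1"
        define t2 where "t2 = coeff A 1 * coeff B 0"
        have St: "S = t1 + t2" using eqs t1_def t2_def by simp
        have "t1 * t2 = G * G^(2^m)" using eqs t1_def t2_def by (simp add: algebra_simps)
        also have "\<dots> = ([:-z,1:] * [:-(z+1),1:])^(2^m + 1)" using Gfac by simp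
        finally have pr: "t1 * t2 = ([:-z,1:] * [:-(z+1),1:])^(2^m + 1)" .
        have "False"
          apply (rule core[OF two _ pr, of bk])
          using Sroot[OF z] Sroot[OF z2] St degS bk0 bk1 by auto
        then show ?thesis ..
      qed
    qed
  qed
  then show ?thesis by (simp add: Fk_def S_def G_def)
qed

lemma hom_zero:
  fixes \<phi> :: "'a::comm_ring_1 \<Rightarrow> 'b::comm_ring_1"
  assumes "\<And>a b. \<phi> (a + b) = \<phi> a + \<phi> b"
  shows "\<phi> 0 = 0"
proof -
  have "\<phi> 0 = \<phi> 0 + \<phi> 0" using assms[of 0 0] by simp
  then show ?thesis by simp
qed

lemma mp_add:
  fixes \<phi> :: "'a::comm_ring_1 \<Rightarrow> 'b::comm_ring_1"
  assumes add: "\<And>a b. \<phi> (a + b) = \<phi> a + \<phi> b"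
  shows "map_poly \<phi> (p + q) = map_poly \<phi> p + map_poly \<phi> q"
  using hom_zero[OF add] by (intro poly_eqI) (simp add: coeff_map_poly add)

lemma mp_mult:
  fixes \<phi> :: "'a::comm_ring_1 \<Rightarrow> 'b::comm_ring_1"
  assumes add: "\<And>a b. \<phi> (a + b) = \<phi> a + \<phi> b"
    and mul: "\<And>a b. \<phi> (a * b) = \<phi> a * \<phi> b"
  shows "map_poly \<phi> (p * q) = map_poly \<phi> p * map_poly \<phi> q"
proof (induction p rule: pCons_induct)
  case 0 then show ?case by simp
next
  case (pCons a p)
  have z: "\<phi> 0 = 0" using hom_zero[OF add] .
  have "map_poly \<phi> (pCons a p * q) = map_poly \<phi> (smult a q + pCons 0 (p * q))"
    by simp
  also have "\<dots> = smult (\<phi> a) (map_poly \<phi> q) + pCons 0 (map_poly \<phi> p * map_poly \<phi> q)"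
    using pCons.IH by (simp add: mp_add[OF add] map_poly_smult[OF z mul] map_poly_pCons[of \<phi>, OF z] z)
  also have "\<dots> = map_poly \<phi> (pCons a p) * map_poly \<phi> q"
    by (simp add: map_poly_pCons[of \<phi>, OF z])
  finally show ?case .
qed

lemma mp_power:
  fixes \<phi> :: "'a::comm_ring_1 \<Rightarrow> 'b::comm_ring_1"
  assumes add: "\<And>a b. \<phi> (a + b) = \<phi> a + \<phi> b"
    and mul: "\<And>a b. \<phi> (a * b) = \<phi> a * \<phi> b" and one: "\<phi> 1 = 1"
  shows "map_poly \<phi> (p ^ k) = map_poly \<phi> p ^ k"
  by (induction k) (simp_all add: one mp_mult[OF add mul])

lemma mp_sum:
  fixes \<phi> :: "'a::comm_ring_1 \<Rightarrow> 'b::comm_ring_1"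
  assumes add: "\<And>a b. \<phi> (a + b) = \<phi> a + \<phi> b"
  shows "map_poly \<phi> (\<Sum>i<(k::nat). f i) = (\<Sum>i<k. map_poly \<phi> (f i))"
  by (induction k) (simp_all add: mp_add[OF add])

lemma card_char:
  shows "of_nat (card (UNIV :: 'f::{field,finite} set)) = (0::'f)"
proof -
  have "(\<Sum>x\<in>(UNIV::'f set). x) = (\<Sum>x\<in>UNIV. x + 1)"
    by (rule sum.reindex_bij_witness[of _ "\<lambda>x. x + 1" "\<lambda>x. x - 1"]) auto
  also have "\<dots> = (\<Sum>x\<in>UNIV. x) + of_nat (card (UNIV :: 'f set))"
    by (simp only: sum.distrib) simp
  finally show ?thesis by simp
qed

theorem lemma3p11:
  fixes h n s :: nat
    and \<beta> \<epsilon> :: "'f::{field,finite}"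
    and \<phi> :: "'f \<Rightarrow> 'k::alg_closed_field"
  assumes "h > 0" and "n > 0" and "s > 0"
    and "card (UNIV :: 'f set) = (2 ^ h) ^ n"
    and "\<beta> \<noteq> 0" and "\<beta> \<noteq> 1"
    and "abs_trace (h * n) \<epsilon> = 1"
    and "\<And>a b. \<phi> (a + b) = \<phi> a + \<phi> b"
    and "\<And>a b. \<phi> (a * b) = \<phi> a * \<phi> b"
    and "\<phi> 1 = 1"
  shows "irreducible (map_poly (map_poly \<phi>) (F2 h s \<beta> \<epsilon>))"
proof -
  note add = assms(8) and mul = assms(9) and one = assms(10)
  have z: "\<phi> 0 = 0" using hom_zero[OF add] .
  have "of_nat ((2 ^ h) ^ n) = (0::'f)" using card_char[where 'f='f] assms(4) by simp
  then have "(2::'f) ^ (h * n) = 0" by (simp add: power_mult)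
  then have two_f: "(2::'f) = 0" by simp
  have "\<phi> 2 = 2" using add[of 1 1] one by simp
  then have two: "(2::'k) = 0" using two_f z by simp
  have inj0: "a = 0" if "\<phi> a = 0" for a
  proof (rule ccontr)
    assume "a \<noteq> 0"
    then have "\<phi> (a * inverse a) = 1" using one by simp
    then show False using that mul[of a "inverse a"] by simp
  qed
  have b0: "\<phi> \<beta> \<noteq> 0" using inj0 assms(5) by blast
  have b1: "\<phi> \<beta> \<noteq> 1"
  proof
    assume "\<phi> \<beta> = 1"
    moreover have "\<phi> (\<beta> - 1) + \<phi> 1 = \<phi> \<beta>" using add[of "\<beta> - 1" 1] by simp
    ultimately have "\<phi> (\<beta> - 1) = 0" using one by simp
    then show False using inj0 assms(6) by force
  qed
  have m: "h * s > 0" using assms(1,3) by simp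
  define Gk where "Gk = [:\<phi> \<epsilon>, 1, 1:]"
  have mG: "map_poly \<phi> [:\<epsilon>, 1, 1:] = Gk"
    by (simp add: Gk_def map_poly_pCons[of \<phi>, OF z] one)
  have mm0: "map_poly \<phi> 0 = 0" by simp
  have "map_poly (map_poly \<phi>) (F2 h s \<beta> \<epsilon>)
      = [: Gk, [:\<phi> \<beta>:] + (\<Sum>i<h*s. Gk^(2^i)), Gk^(2^(h*s)) :]"
    unfolding F2_def Let_def trace_poly_def
    by (simp add: map_poly_pCons[of "map_poly \<phi>", OF mm0] mp_add[OF add] mp_sum[OF add]
        mp_power[OF add mul one] mG map_poly_pCons[of \<phi>, OF z] power_mult one Gk_def)
  then show ?thesis using main_k[OF two b0 b1 m, of "\<phi> \<epsilon>"] by (simp add: Gk_def)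
qed

end
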